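(* There exists a deterministic algorithm for asymmetric streaming pattern matching that, given a text $T$ with $|T|=n$ accessible by value queries and a pattern $P$ with $|P|=m$ arriving as a stream, correctly decides whether $P$ appears as a substring of $T$ using memory $O(1)$ and runtime $O(nm)$.
   Context: Asymmetric streaming pattern matching: a text $T$ over a finite alphabet $\Sigma$ is available via value queries (in each query one gives an index $i$ and receives the $i$-th character of $T$), and a pattern $P$ over $\Sigma$ arrives as a stream of characters, read in order. The goal is to decide whether $P$ appears as a (contiguous) substring of $T$. Memory is measured in machine words (each able to hold an index or a number polynomial in $n$), not counting the read-only access to $T$. *)

theory Defs
  imports Main "HOL-Library.Sublist"
begin

text \<open>A deterministic register machine (word-RAM style) for asymmetric streaming
pattern matching. Characters of the finite alphabet are the naturals below sigma.
Registers hold natural numbers (machine words); a program names only finitely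
many registers, so it uses O(1) words. Instructions:
  Const i c      : r_i := c
  Add/Sub/Mul/Div/Mod i j l : r_i := r_j op r_l   (Sub truncated, x div 0 = 0)
  Query i j      : r_i := T[r_j]   (value query to the text; 0 if out of range)
  Read i         : r_i := 1 + next pattern character, or 0 if the stream has ended
  Jz i l         : if r_i = 0 then jump to l
  Jmp l          : jump to l
  Halt b         : stop with answer b
Each executed instruction costs one time unit.\<close>

datatype instr =
    Const nat nat
  | Add nat nat nat
  | Sub nat nat nat
  | Mul nat nat nat
  | Div nat nat nat
  | Mod nat nat nat
  | Query nat nat
  | Read nat
  | Jz nat nat
  | Jmp nat
  | Halt bool

text \<open>Configuration: program counter, register file, remaining (unread) part of the pattern stream.\<close>
type_synonym conf = "nat \<times> (nat \<Rightarrow> nat) \<times> nat list"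

definition query :: "nat list \<Rightarrow> nat \<Rightarrow> nat" where
  "query T j = (if j < length T then T ! j else 0)"

fun exec_instr :: "nat list \<Rightarrow> instr \<Rightarrow> conf \<Rightarrow> conf" where
  "exec_instr T (Const i c) (pc, r, s) = (Suc pc, r(i := c), s)"
| "exec_instr T (Add i j l) (pc, r, s) = (Suc pc, r(i := r j + r l), s)"
| "exec_instr T (Sub i j l) (pc, r, s) = (Suc pc, r(i := r j - r l), s)"
| "exec_instr T (Mul i j l) (pc, r, s) = (Suc pc, r(i := r j * r l), s)"
| "exec_instr T (Div i j l) (pc, r, s) = (Suc pc, r(i := r j div r l), s)"
| "exec_instr T (Mod i j l) (pc, r, s) = (Suc pc, r(i := r j mod r l), s)"
| "exec_instr T (Query i j) (pc, r, s) = (Suc pc, r(i := query T (r j)), s)"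
| "exec_instr T (Read i) (pc, r, s) =
     (case s of [] \<Rightarrow> (Suc pc, r(i := 0), [])
              | x # xs \<Rightarrow> (Suc pc, r(i := Suc x), xs))"
| "exec_instr T (Jz i l) (pc, r, s) = (if r i = 0 then l else Suc pc, r, s)"
| "exec_instr T (Jmp l) (pc, r, s) = (l, r, s)"
| "exec_instr T (Halt b) c = c"

definition step :: "instr list \<Rightarrow> nat list \<Rightarrow> conf \<Rightarrow> conf" where
  "step prog T c = (if fst c < length prog then exec_instr T (prog ! fst c) c else c)"

definition exec :: "instr list \<Rightarrow> nat list \<Rightarrow> conf \<Rightarrow> nat \<Rightarrow> conf" where
  "exec prog T c t = (step prog T ^^ t) c"

definition init :: "nat \<Rightarrow> nat list \<Rightarrow> conf" where
  "init n P = (0, (\<lambda>_. 0)(0 := n), P)"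

definition halted_with :: "instr list \<Rightarrow> conf \<Rightarrow> bool \<Rightarrow> bool" where
  "halted_with prog c b \<longleftrightarrow> fst c < length prog \<and> prog ! fst c = Halt b"

text \<open>The run on text T and pattern stream P halts within t steps with answer b,
and during these t steps every register value stays below (n+2)^d (words of
polynomial size in n).\<close>
definition run_ok :: "instr list \<Rightarrow> nat list \<Rightarrow> nat list \<Rightarrow> nat \<Rightarrow> nat \<Rightarrow> bool \<Rightarrow> bool" where
  "run_ok prog T P t d b \<longleftrightarrow>
     halted_with prog (exec prog T (init (length T) P) t) b \<and>
     (\<forall>s\<le>t. \<forall>i. fst (snd (exec prog T (init (length T) P) s)) i \<le> (length T + 2) ^ d)"

end

theory Submission
  imports Defs
begin


definition prg :: "instr list" where
"prg = [Const 6 1, Read 3, Jz 3 32, Sub 3 3 6, Mul 4 1 6,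
  Add 7 4 2, Sub 8 0 7, Jz 8 33, Query 8 7, Sub 9 8 3, Sub 10 3 8, Add 9 9 10, Jz 9 15,
  Add 4 4 6, Jmp 5,
  Const 5 0,
  Sub 8 2 5, Jz 8 29, Add 7 1 5, Query 8 7, Add 7 4 5, Query 9 7, Sub 10 8 9, Sub 11 9 8,
  Add 10 10 11, Jz 10 27, Jmp 13,
  Add 5 5 6, Jmp 16,
  Mul 1 4 6, Add 2 2 6, Jmp 1,
  Halt True, Halt False]"

lemma len_prg[simp]: "length prg = 34" by (simp add: prg_def)

lemma prg_nth[simp]:
 "prg ! 0 = Const 6 1" "prg ! 1 = Read 3" "prg ! Suc 0 = Read 3" "prg ! Suc (Suc 0) = Jz 3 32" "prg ! Suc (Suc (Suc 0)) = Sub 3 3 6" "prg ! Suc (Suc (Suc (Suc 0))) = Mul 4 1 6" "prg ! 2 = Jz 3 32" "prg ! 3 = Sub 3 3 6"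
 "prg ! 4 = Mul 4 1 6" "prg ! 5 = Add 7 4 2" "prg ! 6 = Sub 8 0 7" "prg ! 7 = Jz 8 33"
 "prg ! 8 = Query 8 7" "prg ! 9 = Sub 9 8 3" "prg ! 10 = Sub 10 3 8" "prg ! 11 = Add 9 9 10"
 "prg ! 12 = Jz 9 15" "prg ! 13 = Add 4 4 6" "prg ! 14 = Jmp 5" "prg ! 15 = Const 5 0"
 "prg ! 16 = Sub 8 2 5" "prg ! 17 = Jz 8 29" "prg ! 18 = Add 7 1 5" "prg ! 19 = Query 8 7"
 "prg ! 20 = Add 7 4 5" "prg ! 21 = Query 9 7" "prg ! 22 = Sub 10 8 9" "prg ! 23 = Sub 11 9 8"
 "prg ! 24 = Add 10 10 11" "prg ! 25 = Jz 10 27" "prg ! 26 = Jmp 13" "prg ! 27 = Add 5 5 6"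
 "prg ! 28 = Jmp 16" "prg ! 29 = Mul 1 4 6" "prg ! 30 = Add 2 2 6" "prg ! 31 = Jmp 1"
 "prg ! 32 = Halt True" "prg ! 33 = Halt False"
  by (simp_all add: prg_def)

definition bnd :: "(nat \<Rightarrow> nat) \<Rightarrow> nat \<Rightarrow> bool" where
  "bnd r B \<longleftrightarrow> (\<forall>x. r x \<le> B)"

lemma bnd_upd[simp]: "bnd r B \<Longrightarrow> v \<le> B \<Longrightarrow> bnd (r(x := v)) B"
  by (simp add: bnd_def)

lemma bndD: "bnd r B \<Longrightarrow> r x \<le> B" by (simp add: bnd_def)

definition runb :: "nat list \<Rightarrow> nat \<Rightarrow> conf \<Rightarrow> nat \<Rightarrow> conf \<Rightarrow> bool" where
  "runb T B c t c' \<longleftrightarrow> exec prg T c t = c' \<and> (\<forall>u\<le>t. bnd (fst (snd (exec prg T c u))) B)"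

definition reach :: "nat list \<Rightarrow> nat \<Rightarrow> conf \<Rightarrow> nat \<Rightarrow> (conf \<Rightarrow> bool) \<Rightarrow> bool" where
  "reach T B c X Q \<longleftrightarrow> (\<exists>t\<le>X. \<exists>c'. runb T B c t c' \<and> Q c')"

lemma exec_0[simp]: "exec p T c 0 = c" by (simp add: exec_def)
lemma exec_Suc: "exec p T c (Suc t) = exec p T (step p T c) t"
  by (simp add: exec_def funpow_Suc_right del: funpow.simps)
lemma exec_add: "exec p T c (a + b) = exec p T (exec p T c a) b"
  by (simp add: exec_def funpow_add add.commute[of a b])

lemma reach_stop: "bnd (fst (snd c)) B \<Longrightarrow> Q c \<Longrightarrow> reach T B c X Q"
  unfolding reach_def runb_def by (rule exI[of _ 0]) auto

lemma reach_mono: "reach T B c X Q \<Longrightarrow> X \<le> Y \<Longrightarrow> (\<And>c. Q c \<Longrightarrow> Q' c) \<Longrightarrow> reach T B c Y Q'"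
  unfolding reach_def by (meson order.trans)

lemma reach_step: "bnd (fst (snd c)) B \<Longrightarrow> 0 < Y \<Longrightarrow> reach T B (step prg T c) (Y - 1) Q \<Longrightarrow> reach T B c Y Q"
  unfolding reach_def runb_def
proof (elim exE conjE)
  fix t c'
  assume b: "bnd (fst (snd c)) B" and Y: "0 < Y" and t: "t \<le> Y - 1"
    and e: "exec prg T (step prg T c) t = c'"
    and a: "\<forall>u\<le>t. bnd (fst (snd (exec prg T (step prg T c) u))) B" and q: "Q c'"
  show "\<exists>t\<le>Y. \<exists>c'. (exec prg T c t = c' \<and> (\<forall>u\<le>t. bnd (fst (snd (exec prg T c u))) B)) \<and> Q c'"
  proof (intro exI conjI)
    show "Suc t \<le> Y" using t Y by simp
    show "exec prg T c (Suc t) = c'" using e by (simp add: exec_Suc)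
    show "\<forall>u\<le>Suc t. bnd (fst (snd (exec prg T c u))) B"
    proof (intro allI impI)
      fix u assume "u \<le> Suc t"
      then show "bnd (fst (snd (exec prg T c u))) B"
        using a b by (cases u) (auto simp: exec_Suc)
    qed
    show "Q c'" by fact
  qed
qed

lemma reach_trans: "reach T B c X Q \<Longrightarrow> (\<And>c'. Q c' \<Longrightarrow> reach T B c' Y R) \<Longrightarrow> reach T B c (X + Y) R"
  unfolding reach_def runb_def
proof (elim exE conjE)
  fix t c'
  assume t: "t \<le> X" and e: "exec prg T c t = c'" and a: "\<forall>u\<le>t. bnd (fst (snd (exec prg T c u))) B"
    and q: "Q c'"
    and h: "\<And>c'. Q c' \<Longrightarrow> \<exists>t\<le>Y. \<exists>c''. (exec prg T c' t = c'' \<and> (\<forall>u\<le>t. bnd (fst (snd (exec prg T c' u))) B)) \<and> R c''"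
  obtain t2 c'' where t2: "t2 \<le> Y" and e2: "exec prg T c' t2 = c''"
    and a2: "\<forall>u\<le>t2. bnd (fst (snd (exec prg T c' u))) B" and r: "R c''"
    using h[OF q] by blast
  show "\<exists>t\<le>X + Y. \<exists>c'. (exec prg T c t = c' \<and> (\<forall>u\<le>t. bnd (fst (snd (exec prg T c u))) B)) \<and> R c'"
  proof (intro exI conjI)
    show "t + t2 \<le> X + Y" using t t2 by simp
    show "exec prg T c (t + t2) = c''" using e e2 by (simp add: exec_add)
    show "\<forall>u\<le>t + t2. bnd (fst (snd (exec prg T c u))) B"
    proof (intro allI impI)
      fix u assume u: "u \<le> t + t2"
      show "bnd (fst (snd (exec prg T c u))) B"
      proof (cases "u \<le> t")
        case True then show ?thesis using a by simp
      next
        case False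
        then obtain v where "u = t + v" "v \<le> t2" using u le_add_diff_inverse by (metis add_le_cancel_left nat_le_linear)
        then show ?thesis using a2 e by (simp add: exec_add)
      qed
    qed
    show "R c''" by fact
  qed
qed

definition keyr :: "nat list \<Rightarrow> (nat \<Rightarrow> nat) \<Rightarrow> nat \<Rightarrow> nat \<Rightarrow> nat \<Rightarrow> nat \<Rightarrow> bool" where
  "keyr T r i k c j \<longleftrightarrow> r 0 = length T \<and> r 1 = i \<and> r 2 = k \<and> r 3 = c \<and> r 4 = j \<and> r 6 = 1"

lemma step_simp: "step prg T (pc, r, s) = (if pc < 34 then exec_instr T (prg ! pc) (pc, r, s) else (pc, r, s))"
  by (simp add: step_def)

lemma diff_eq0: "((a::nat) - b + (b - a) = 0) \<longleftrightarrow> a = b" by arith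

lemma query_le: "set T \<subseteq> {..<\<sigma>} \<Longrightarrow> query T x \<le> \<sigma>"
  by (auto simp: query_def) (meson lessThan_iff less_imp_le nth_mem subsetD)
lemma query_nth: "x < length T \<Longrightarrow> query T x = T ! x" by (simp add: query_def)


lemma cost1: "i \<le> L \<Longrightarrow> L + k + 1 \<le> n \<Longrightarrow> k + 1 \<le> (K::nat) \<Longrightarrow>
  7 + 25*(k+1)*(L-i+1) + 32*(2*n - 2*L - (k+1) + 2)*K \<le> 32*(2*n-2*i-k+2)*K"
proof -
  assume a: "i \<le> L" "L + k + 1 \<le> n" "k + 1 \<le> K"
  obtain D where D: "L = i + D" using a(1) le_Suc_ex by blast
  define u where "u = 2*n - 2*L - (k+1) + 2"
  have e: "2*n-2*i-k+2 = u + 2*D + 1" using a D unfolding u_def by simp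
  have e2: "L - i + 1 = D + 1" using D by simp
  have m: "(k+1)*(D+1) \<le> K*(D+1)" using a(3) by (rule mult_le_mono1)
  have m2: "1 \<le> (k+1)*(D+1)" by simp
  have "7 + 25*(k+1)*(D+1) + 32*u*K \<le> 32*(u + 2*D + 1)*K"
  proof -
    have "7 + 25*(k+1)*(D+1) \<le> 32*((k+1)*(D+1))" using m2 unfolding mult.assoc by linarith
    also have "\<dots> \<le> 32*(K*(D+1))" using m by simp
    also have "\<dots> \<le> 32*((2*D+1)*K)" by (simp add: mult.commute mult_le_mono1)
    finally have "7 + 25*(k+1)*(D+1) \<le> 32*((2*D+1)*K)" .
    then show ?thesis by (simp add: algebra_simps)
  qed
  then show ?thesis unfolding e e2 u_def[symmetric] by simp
qed

lemma cost2: "i + k \<le> n \<Longrightarrow> k + 1 \<le> (K::nat) \<Longrightarrow>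
  4 + 25*(k+1)*(n-k-i+1) \<le> 32*(2*n-2*i-k+2)*K"
proof -
  assume a: "i + k \<le> n" "k + 1 \<le> K"
  have m2: "1 \<le> (k+1)*(n-k-i+1)" by simp
  have "4 + 25*(k+1)*(n-k-i+1) \<le> 32*((k+1)*(n-k-i+1))" using m2 unfolding mult.assoc by linarith
  also have "\<dots> \<le> 32*(K*(2*n-2*i-k+2))" using a by (intro mult_le_mono2 mult_le_mono) auto
  finally show ?thesis by (simp add: algebra_simps)
qed


context
  fixes T :: "nat list" and \<sigma> B :: nat
  assumes alph: "set T \<subseteq> {..<\<sigma>}" and BB: "length T + \<sigma> \<le> B"
begin

lemma tle: "x < length T \<Longrightarrow> T ! x \<le> B" using query_le[OF alph, of x] BB by (simp add: query_def)

lemma tsig: "x < length T \<Longrightarrow> T ! x < \<sigma>" using alph by (meson lessThan_iff nth_mem subsetD)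

lemma tdiff: "x < length T \<Longrightarrow> y < length T \<Longrightarrow> T!x - T!y + (T!y - T!x) \<le> B"
  using tsig[of x] tsig[of y] BB by linarith

lemma tdiff1: "x < length T \<Longrightarrow> T!x - y \<le> B"
  using tle[of x] by linarith

lemma qle: "query T x \<le> B" using query_le[OF alph, of x] BB by simp

lemma cmp_loop:
  "keyr T r i k c j \<Longrightarrow> r 5 = p \<Longrightarrow> bnd r B \<Longrightarrow> p \<le> k \<Longrightarrow> i + k \<le> length T \<Longrightarrow> j + k < length T \<Longrightarrow>
   reach T B (16, r, s) (13*(k-p)+13) (\<lambda>(pc', r', s'). s' = s \<and> keyr T r' i k c j \<and> bnd r' B \<and>
      (if (\<forall>q. p \<le> q \<and> q < k \<longrightarrow> T!(i+q) = T!(j+q)) then pc' = 29 else pc' = 13))"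
proof (induction "k - p" arbitrary: p r)
  case 0
  then have pk: "p = k" by simp
  show ?case
    using 0 BB
    apply -
    apply (rule reach_step, simp, simp, simp add: step_simp keyr_def)
    apply (rule reach_step, simp, simp, simp add: step_simp keyr_def)
    apply (rule reach_stop, simp)
    apply (simp add: keyr_def)
    done
next
  case (Suc x p r)
  have pk: "p < k" using Suc by simp
  have ip: "i + p < length T" "j + p < length T" using Suc pk by simp_all
  have kr: "r 0 = length T" "r 1 = i" "r 2 = k" "r 3 = c" "r 4 = j" "r 6 = 1" using Suc(3) by (simp_all add: keyr_def)
  have ipB: "i + p \<le> B" "j + p \<le> B" "k - p \<le> B" "Suc p \<le> B" using ip BB Suc by linarith+
  have qs: "query T x \<le> B" for x by (rule qle)
  have bs: "n \<le> \<sigma> \<Longrightarrow> m \<le> \<sigma> \<Longrightarrow> n - m + (m - n) \<le> B" for n m using BB by linarith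
  have qs2: "query T x \<le> \<sigma>" for x by (rule query_le[OF alph])
  show ?case
  proof (cases "T!(i+p) = T!(j+p)")
    case True
    have IH: "reach T B (16, r', s) (13 * (k - Suc p) + 13)
       (\<lambda>(pc', r', s'). s' = s \<and> keyr T r' i k c j \<and> bnd r' B \<and>
          (if \<forall>q. Suc p \<le> q \<and> q < k \<longrightarrow> T ! (i + q) = T ! (j + q) then pc' = 29 else pc' = 13))"
      if "keyr T r' i k c j" "r' 5 = Suc p" "bnd r' B" for r'
      apply (rule Suc(1))
      using Suc(2-) that pk by auto
    have eqv: "(\<forall>q. Suc p \<le> q \<and> q < k \<longrightarrow> T ! (i + q) = T ! (j + q)) = (\<forall>q. p \<le> q \<and> q < k \<longrightarrow> T ! (i + q) = T ! (j + q))"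
      using True by (metis Suc_leD Suc_leI le_neq_implies_less)
    show ?thesis
      using Suc(2-) kr BB pk ip qs True
      apply -
      apply (rule reach_step, simp add: query_nth tle tdiff tdiff1 ipB, simp, simp add: step_simp query_nth tle tdiff tdiff1 ipB)
      apply (rule reach_step, simp add: query_nth tle tdiff tdiff1 ipB, simp, simp add: step_simp query_nth tle tdiff tdiff1 ipB)
      apply (rule reach_step, simp add: query_nth tle tdiff tdiff1 ipB, simp, simp add: step_simp query_nth tle tdiff tdiff1 ipB)
      apply (rule reach_step, simp add: query_nth tle tdiff tdiff1 ipB, simp, simp add: step_simp query_nth tle tdiff tdiff1 ipB)
      apply (rule reach_step, simp add: query_nth tle tdiff tdiff1 ipB, simp, simp add: step_simp query_nth tle tdiff tdiff1 ipB)
      apply (rule reach_step, simp add: query_nth tle tdiff tdiff1 ipB, simp, simp add: step_simp query_nth tle tdiff tdiff1 ipB)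
      apply (rule reach_step, simp add: query_nth tle tdiff tdiff1 ipB, simp, simp add: step_simp query_nth tle tdiff tdiff1 ipB)
      apply (rule reach_step, simp add: query_nth tle tdiff tdiff1 ipB, simp, simp add: step_simp query_nth tle tdiff tdiff1 ipB)
      apply (rule reach_step, simp add: query_nth tle tdiff tdiff1 ipB, simp, simp add: step_simp query_nth tle tdiff tdiff1 ipB)
      apply (rule reach_step, simp add: query_nth tle tdiff tdiff1 ipB, simp, simp add: step_simp query_nth tle tdiff tdiff1 ipB)
      apply (rule reach_step, simp add: query_nth tle tdiff tdiff1 ipB, simp, simp add: step_simp query_nth tle tdiff tdiff1 ipB)
      apply (rule reach_step, simp add: query_nth tle tdiff tdiff1 ipB, simp, simp add: step_simp query_nth tle tdiff tdiff1 ipB)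
      apply (rule reach_mono[OF IH])
      apply (simp_all add: keyr_def ipB eqv tle ip split: prod.splits)
      done
  next
    case False
    have nq: "\<not> (\<forall>q. p \<le> q \<and> q < k \<longrightarrow> T ! (i + q) = T ! (j + q))" using False pk by auto
    have nq0: "(T!(i+p) - T!(j+p) + (T!(j+p) - T!(i+p)) = 0) = False"
      "(T!(i+p) \<le> T!(j+p) \<and> T!(j+p) \<le> T!(i+p)) = False" using False by auto
    show ?thesis
      using Suc(2-) kr BB pk ip qs False
      apply -
      apply (rule reach_step, simp add: query_nth tle tdiff tdiff1 ipB ip, simp, simp add: step_simp query_nth tle tdiff tdiff1 ipB ip nq0)
      apply (rule reach_step, simp add: query_nth tle tdiff tdiff1 ipB ip, simp, simp add: step_simp query_nth tle tdiff tdiff1 ipB ip nq0)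
      apply (rule reach_step, simp add: query_nth tle tdiff tdiff1 ipB ip, simp, simp add: step_simp query_nth tle tdiff tdiff1 ipB ip nq0)
      apply (rule reach_step, simp add: query_nth tle tdiff tdiff1 ipB ip, simp, simp add: step_simp query_nth tle tdiff tdiff1 ipB ip nq0)
      apply (rule reach_step, simp add: query_nth tle tdiff tdiff1 ipB ip, simp, simp add: step_simp query_nth tle tdiff tdiff1 ipB ip nq0)
      apply (rule reach_step, simp add: query_nth tle tdiff tdiff1 ipB ip, simp, simp add: step_simp query_nth tle tdiff tdiff1 ipB ip nq0)
      apply (rule reach_step, simp add: query_nth tle tdiff tdiff1 ipB ip, simp, simp add: step_simp query_nth tle tdiff tdiff1 ipB ip nq0)
      apply (rule reach_step, simp add: query_nth tle tdiff tdiff1 ipB ip, simp, simp add: step_simp query_nth tle tdiff tdiff1 ipB ip nq0)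
      apply (rule reach_step, simp add: query_nth tle tdiff tdiff1 ipB ip, simp, simp add: step_simp query_nth tle tdiff tdiff1 ipB ip nq0)
      apply (rule reach_step, simp add: query_nth tle tdiff tdiff1 ipB ip, simp, simp add: step_simp query_nth tle tdiff tdiff1 ipB ip nq0)
      apply (rule reach_step, simp add: query_nth tle tdiff tdiff1 ipB ip, simp, simp add: step_simp query_nth tle tdiff tdiff1 ipB ip nq0)
      apply (rule reach_stop)
      apply (simp_all add: keyr_def ipB nq tle ip tdiff tdiff1)
      done
  qed
qed

definition good :: "nat \<Rightarrow> nat \<Rightarrow> nat \<Rightarrow> nat \<Rightarrow> bool" where
  "good i k c j \<longleftrightarrow> j + k < length T \<and> T!(j+k) = c \<and> (\<forall>q<k. T!(i+q) = T!(j+q))"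

lemma least_shift: "\<not> good i k c j \<Longrightarrow> (LEAST j'. j \<le> j' \<and> good i k c j') = (LEAST j'. Suc j \<le> j' \<and> good i k c j')"
  by (metis Suc_leI le_neq_implies_less Suc_leD)

lemma ex_shift: "\<not> good i k c j \<Longrightarrow> (\<exists>j'. j \<le> j' \<and> good i k c j') = (\<exists>j'. Suc j \<le> j' \<and> good i k c j')"
  by (metis Suc_leI le_neq_implies_less Suc_leD)

lemma scan_loop:
  "keyr T r i k c j \<Longrightarrow> bnd r B \<Longrightarrow> i + k \<le> length T \<Longrightarrow> j + k \<le> length T \<Longrightarrow> c \<le> \<sigma> \<Longrightarrow>
   (if \<exists>j'. j \<le> j' \<and> good i k c j'
    then reach T B (5,r,s) (25*(k+1)*((LEAST j'. j \<le> j' \<and> good i k c j') - j + 1))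
       (\<lambda>(pc',r',s'). pc' = 29 \<and> s' = s \<and> keyr T r' i k c (LEAST j'. j \<le> j' \<and> good i k c j') \<and> bnd r' B)
    else reach T B (5,r,s) (25*(k+1)*(length T - k - j + 1)) (\<lambda>(pc',r',s'). pc' = 33 \<and> bnd r' B))"
proof (induction "length T - k - j" arbitrary: j r)
  case 0
  then have jk: "j + k = length T" by simp
  have ng: "\<not> (\<exists>j'. j \<le> j' \<and> good i k c j')" using jk by (auto simp: good_def)
  have kr: "r 0 = length T" "r 1 = i" "r 2 = k" "r 3 = c" "r 4 = j" "r 6 = 1" using 0 by (simp_all add: keyr_def)
  have sf: "j + k \<le> B" "length T \<le> B" using jk BB by simp_all
  show ?case
    unfolding if_not_P[OF ng]
    using 0 kr jk
    apply -
      apply (rule reach_step, simp add: sf, simp, simp add: step_simp sf)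
      apply (rule reach_step, simp add: sf, simp, simp add: step_simp sf)
      apply (rule reach_step, simp add: sf, simp, simp add: step_simp sf)
      apply (rule reach_stop)
      apply (simp_all add: sf)
      done
next
  case (Suc x j r)
  have jk: "j + k < length T" using Suc by simp
  have kr: "r 0 = length T" "r 1 = i" "r 2 = k" "r 3 = c" "r 4 = j" "r 6 = 1" using Suc by (simp_all add: keyr_def)
  have sf: "j + k \<le> B" "Suc j \<le> B" "length T - (j + k) \<le> B" "T!(j+k) \<le> B" "c - T!(j+k) \<le> B"
     "T!(j+k) - c \<le> B" "T!(j+k) - c + (c - T!(j+k)) \<le> B" "query T (j + k) = T!(j+k)" "0 \<le> B" "c \<le> B"
    using jk BB tle[of "j+k"] tsig[of "j+k"] Suc.prems(5) by (auto simp: query_nth)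
  have IH: "if \<exists>j'. Suc j \<le> j' \<and> good i k c j'
    then reach T B (5,r',s) (25*(k+1)*((LEAST j'. Suc j \<le> j' \<and> good i k c j') - Suc j + 1))
       (\<lambda>(pc',r',s'). pc' = 29 \<and> s' = s \<and> keyr T r' i k c (LEAST j'. Suc j \<le> j' \<and> good i k c j') \<and> bnd r' B)
    else reach T B (5,r',s) (25*(k+1)*(length T - k - Suc j + 1)) (\<lambda>(pc',r',s'). pc' = 33 \<and> bnd r' B)"
    if "keyr T r' i k c (Suc j)" "bnd r' B" for r'
    apply (rule Suc(1))
    using Suc(2-) that jk by auto
  have tail: "?case" if pre: "reach T B (5,r,s) X (\<lambda>(pc',r',s'). pc' = 5 \<and> s' = s \<and> keyr T r' i k c (Suc j) \<and> bnd r' B)"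
     and X: "X \<le> 25 * (k + 1)" and ng: "\<not> good i k c j" for X
    proof (cases "\<exists>j'. Suc j \<le> j' \<and> good i k c j'")
    case True
    define L where "L = (LEAST j'. Suc j \<le> j' \<and> good i k c j')"
    have L: "Suc j \<le> L" using LeastI_ex[OF True] L_def by simp
    have R: "reach T B (5,r,s) (X + 25*(k+1)*(L - Suc j + 1)) (\<lambda>(pc',r',s'). pc' = 29 \<and> s' = s \<and> keyr T r' i k c L \<and> bnd r' B)"
    proof (rule reach_trans[OF pre])
      fix c' :: conf assume "case c' of (pc', r', s') \<Rightarrow> pc' = 5 \<and> s' = s \<and> keyr T r' i k c (Suc j) \<and> bnd r' B"
      then obtain r' where c': "c' = (5, r', s)" "keyr T r' i k c (Suc j)" "bnd r' B" by auto
      show "reach T B c' (25 * (k + 1) * (L - Suc j + 1)) (\<lambda>(pc', r', s'). pc' = 29 \<and> s' = s \<and> keyr T r' i k c L \<and> bnd r' B)"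
        using IH[OF c'(2,3)] True unfolding c'(1) L_def by simp
    qed
    have e: "L - j = Suc (L - Suc j)" using L by simp
    show ?thesis using True unfolding ex_shift[OF ng] least_shift[OF ng] L_def[symmetric]
      apply simp
      apply (rule reach_mono[OF R])
       using X apply (simp add: e)
      apply simp
      done
  next
    case False
    have R: "reach T B (5,r,s) (X + 25*(k+1)*(length T - k - Suc j + 1)) (\<lambda>(pc',r',s'). pc' = 33 \<and> bnd r' B)"
    proof (rule reach_trans[OF pre])
      fix c' :: conf assume "case c' of (pc', r', s') \<Rightarrow> pc' = 5 \<and> s' = s \<and> keyr T r' i k c (Suc j) \<and> bnd r' B"
      then obtain r' where c': "c' = (5, r', s)" "keyr T r' i k c (Suc j)" "bnd r' B" by auto
      show "reach T B c' (25*(k+1)*(length T - k - Suc j + 1)) (\<lambda>(pc',r',s'). pc' = 33 \<and> bnd r' B)"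
        using IH[OF c'(2,3)] False unfolding c'(1) by simp
    qed
    have e: "length T - (k + j) = Suc (length T - Suc (k + j))" using jk by simp
    show ?thesis unfolding ex_shift[OF ng] if_not_P[OF False]
      apply (rule reach_mono[OF R])
       using X apply (simp add: e)
      apply simp
      done
  qed
  show ?case
  proof (cases "T!(j+k) = c")
    case False
    have ng: "\<not> good i k c j" using False by (simp add: good_def)
    have nq0: "(T!(j+k) - c + (c - T!(j+k)) = 0) = False"
      "(T!(j+k) \<le> c \<and> c \<le> T!(j+k)) = False" using False by auto
    have pre: "reach T B (5,r,s) 10 (\<lambda>(pc',r',s'). pc' = 5 \<and> s' = s \<and> keyr T r' i k c (Suc j) \<and> bnd r' B)"
      using Suc(2-) kr jk
      apply -
      apply (rule reach_step, simp add: sf, simp, simp add: step_simp sf nq0)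
      apply (rule reach_step, simp add: sf, simp, simp add: step_simp sf nq0)
      apply (rule reach_step, simp add: sf, simp, simp add: step_simp sf nq0)
      apply (rule reach_step, simp add: sf, simp, simp add: step_simp sf nq0)
      apply (rule reach_step, simp add: sf, simp, simp add: step_simp sf nq0)
      apply (rule reach_step, simp add: sf, simp, simp add: step_simp sf nq0)
      apply (rule reach_step, simp add: sf, simp, simp add: step_simp sf nq0)
      apply (rule reach_step, simp add: sf, simp, simp add: step_simp sf nq0)
      apply (rule reach_step, simp add: sf, simp, simp add: step_simp sf nq0)
      apply (rule reach_step, simp add: sf, simp, simp add: step_simp sf nq0)
      apply (rule reach_stop)
      apply (simp_all add: sf keyr_def)
      done
    show ?thesis by (rule tail[OF pre _ ng]) simp
  next
    case True
    have pre9: "reach T B (5,r,s) 9 (\<lambda>(pc',r',s'). pc' = 16 \<and> s' = s \<and> keyr T r' i k c j \<and> r' 5 = 0 \<and> bnd r' B)"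
      using Suc(2-) kr jk True
      apply -
      apply (rule reach_step, simp add: sf, simp, simp add: step_simp sf)
      apply (rule reach_step, simp add: sf, simp, simp add: step_simp sf)
      apply (rule reach_step, simp add: sf, simp, simp add: step_simp sf)
      apply (rule reach_step, simp add: sf, simp, simp add: step_simp sf)
      apply (rule reach_step, simp add: sf, simp, simp add: step_simp sf)
      apply (rule reach_step, simp add: sf, simp, simp add: step_simp sf)
      apply (rule reach_step, simp add: sf, simp, simp add: step_simp sf)
      apply (rule reach_step, simp add: sf, simp, simp add: step_simp sf)
      apply (rule reach_step, simp add: sf, simp, simp add: step_simp sf)
      apply (rule reach_stop)
      apply (simp_all add: sf keyr_def)
      done
    have cm: "reach T B (5,r,s) (9 + (13*(k-0)+13)) (\<lambda>(pc',r',s'). s' = s \<and> keyr T r' i k c j \<and> bnd r' B \<and>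
      (if (\<forall>q. 0 \<le> q \<and> q < k \<longrightarrow> T!(i+q) = T!(j+q)) then pc' = 29 else pc' = 13))"
    proof (rule reach_trans[OF pre9])
      fix c' :: conf assume "case c' of (pc',r',s') \<Rightarrow> pc' = 16 \<and> s' = s \<and> keyr T r' i k c j \<and> r' 5 = 0 \<and> bnd r' B"
      then obtain r' where c': "c' = (16, r', s)" "keyr T r' i k c j" "r' 5 = 0" "bnd r' B" by auto
      show "reach T B c' (13*(k-0)+13) (\<lambda>(pc',r',s'). s' = s \<and> keyr T r' i k c j \<and> bnd r' B \<and>
        (if (\<forall>q. 0 \<le> q \<and> q < k \<longrightarrow> T!(i+q) = T!(j+q)) then pc' = 29 else pc' = 13))"
        unfolding c'(1) by (rule cmp_loop[OF c'(2,3,4)]) (use Suc.prems jk in auto)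
    qed
    show ?thesis
    proof (cases "\<forall>q<k. T!(i+q) = T!(j+q)")
      case True2: True
      have g: "good i k c j" using True True2 jk by (simp add: good_def)
      have ex: "\<exists>j'. j \<le> j' \<and> good i k c j'" using g by blast
      have le: "(LEAST j'. j \<le> j' \<and> good i k c j') = j"
        by (rule Least_equality) (use g in auto)
      show ?thesis unfolding if_P[OF ex] le
        apply (rule reach_mono[OF cm])
        using True2 by auto
    next
      case False2: False
      have ng: "\<not> good i k c j" using False2 by (simp add: good_def)
      have pre: "reach T B (5,r,s) (9 + (13*(k-0)+13) + 2) (\<lambda>(pc',r',s'). pc' = 5 \<and> s' = s \<and> keyr T r' i k c (Suc j) \<and> bnd r' B)"
      proof (rule reach_trans[OF cm])
        fix c' :: conf assume "case c' of (pc',r',s') \<Rightarrow> s' = s \<and> keyr T r' i k c j \<and> bnd r' B \<and>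
          (if (\<forall>q. 0 \<le> q \<and> q < k \<longrightarrow> T!(i+q) = T!(j+q)) then pc' = 29 else pc' = 13)"
        then obtain r' where c': "c' = (13, r', s)" "keyr T r' i k c j" "bnd r' B" using False2 by auto
        have kr': "r' 4 = j" "r' 6 = 1" using c'(2) by (simp_all add: keyr_def)
        show "reach T B c' 2 (\<lambda>(pc',r',s'). pc' = 5 \<and> s' = s \<and> keyr T r' i k c (Suc j) \<and> bnd r' B)"
          unfolding c'(1) using c'(2,3) kr'
          apply -
      apply (rule reach_step, simp add: sf, simp, simp add: step_simp sf)
      apply (rule reach_step, simp add: sf, simp, simp add: step_simp sf)
          apply (rule reach_stop)
          apply (simp_all add: sf keyr_def)
          done
      qed
      show ?thesis by (rule tail[OF pre _ ng]) simp
    qed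
  qed
qed

definition occ :: "nat list \<Rightarrow> nat \<Rightarrow> bool" where
  "occ w j \<longleftrightarrow> j + length w \<le> length T \<and> take (length w) (drop j T) = w"

lemma sublist_occ: "sublist w T \<longleftrightarrow> (\<exists>j. occ w j)"
proof
  assume "sublist w T"
  then obtain ps ss where "T = ps @ w @ ss" by (auto simp: sublist_def)
  then show "\<exists>j. occ w j" unfolding occ_def by (intro exI[of _ "length ps"]) simp
next
  assume "\<exists>j. occ w j"
  then obtain j where o: "occ w j" by blast
  have "T = take j T @ take (length w) (drop j T) @ drop (length w) (drop j T)"
    by (metis append_take_drop_id)
  then show "sublist w T" using o unfolding occ_def sublist_def by metis
qed

lemma occ_prefix: "occ (w @ v) j \<Longrightarrow> occ w j"
  unfolding occ_def by (auto simp: take_add)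

lemma take_eq_iff: "i + k \<le> length T \<Longrightarrow> j + k \<le> length T \<Longrightarrow>
   (take k (drop j T) = take k (drop i T)) \<longleftrightarrow> (\<forall>q<k. T!(i+q) = T!(j+q))"
  by (auto simp: list_eq_iff_nth_eq)

lemma occ_good: "i + k \<le> length T \<Longrightarrow> occ (take k (drop i T) @ [c]) j \<longleftrightarrow> good i k c j"
proof
  assume ik: "i + k \<le> length T" and o: "occ (take k (drop i T) @ [c]) j"
  have lw: "length (take k (drop i T) @ [c]) = Suc k" using ik by simp
  have o2: "j + Suc k \<le> length T" "take (Suc k) (drop j T) = take k (drop i T) @ [c]"
    using o unfolding occ_def lw by simp_all
  then have jk: "j + k < length T" by simp
  have "take (Suc k) (drop j T) = take k (drop j T) @ [T!(j+k)]"
    using jk by (simp add: take_Suc_conv_app_nth)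
  then have "take k (drop j T) = take k (drop i T)" "T!(j+k) = c"
    using o2 by simp_all
  then show "good i k c j" using take_eq_iff[OF ik] jk by (simp add: good_def)
next
  assume ik: "i + k \<le> length T" and g: "good i k c j"
  then have jk: "j + k < length T" by (simp add: good_def)
  have "take (Suc k) (drop j T) = take k (drop j T) @ [T!(j+k)]"
    using jk by (simp add: take_Suc_conv_app_nth)
  moreover have "take k (drop j T) = take k (drop i T)" using take_eq_iff[OF ik] jk g by (simp add: good_def)
  moreover have lw: "length (take k (drop i T) @ [c]) = Suc k" using ik by simp
  ultimately show "occ (take k (drop i T) @ [c]) j"
    using g ik jk unfolding occ_def lw by (simp add: good_def)
qed

lemma main_loop:
  "r 0 = length T \<Longrightarrow> r 1 = i \<Longrightarrow> r 2 = k \<Longrightarrow> r 6 = 1 \<Longrightarrow> bnd r B \<Longrightarrow> i + k \<le> length T \<Longrightarrow>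
   P = take k (drop i T) @ s \<Longrightarrow> (\<forall>j<i. \<not> occ (take k (drop i T)) j) \<Longrightarrow> set s \<subseteq> {..<\<sigma>} \<Longrightarrow>
   reach T B (1, r, s) (32*(2*length T - 2*i - k + 2)*(k + length s + 1)) (\<lambda>c'. halted_with prg c' (sublist P T))"
proof (induction s arbitrary: i k r)
  case Nil
  have o: "occ (take k (drop i T)) i" using Nil by (simp add: occ_def)
  have sb: "sublist P T" using Nil o sublist_occ by auto
  have sf: "0 \<le> B" by simp
  show ?case
    using Nil sb
    apply -
      apply (rule reach_step, simp add: sf, simp, simp add: step_simp sf)
      apply (rule reach_step, simp add: sf, simp, simp add: step_simp sf)
    apply (rule reach_stop)
    apply (simp_all add: halted_with_def)
    done
next
  case (Cons x s' i k r)
  define w where "w = take k (drop i T)"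
  have xs: "x < \<sigma>" "set s' \<subseteq> {..<\<sigma>}" using Cons.prems(9) by auto
  have sf: "Suc x \<le> B" "x \<le> B" "i \<le> B" using xs BB Cons.prems by linarith+
  have pre4: "reach T B (1,r,x#s') 4 (\<lambda>(pc',r',s''). pc' = 5 \<and> s'' = s' \<and> keyr T r' i k x i \<and> bnd r' B)"
    using Cons.prems
    apply -
      apply (rule reach_step, simp add: sf, simp, simp add: step_simp sf)
      apply (rule reach_step, simp add: sf, simp, simp add: step_simp sf)
      apply (rule reach_step, simp add: sf, simp, simp add: step_simp sf)
      apply (rule reach_step, simp add: sf, simp, simp add: step_simp sf)
    apply (rule reach_stop)
    apply (simp_all add: sf keyr_def)
    done
  have sc: "if \<exists>j'. i \<le> j' \<and> good i k x j'
    then reach T B (5,r',s') (25*(k+1)*((LEAST j'. i \<le> j' \<and> good i k x j') - i + 1))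
       (\<lambda>(pc',r',s''). pc' = 29 \<and> s'' = s' \<and> keyr T r' i k x (LEAST j'. i \<le> j' \<and> good i k x j') \<and> bnd r' B)
    else reach T B (5,r',s') (25*(k+1)*(length T - k - i + 1)) (\<lambda>(pc',r',s'). pc' = 33 \<and> bnd r' B)"
    if "keyr T r' i k x i" "bnd r' B" for r'
    by (rule scan_loop) (use that Cons.prems xs in auto)
  have noocc: "\<not> occ (w @ [x]) j" if "j < i" for j
    using Cons.prems(8) that occ_prefix unfolding w_def by blast
  have ik: "i + k \<le> length T" by fact
  show ?case
  proof (cases "\<exists>j'. i \<le> j' \<and> good i k x j'")
    case True
    define L where "L = (LEAST j'. i \<le> j' \<and> good i k x j')"
    have L: "i \<le> L" "good i k x L" using LeastI_ex[OF True] unfolding L_def by auto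
    have Lmin: "\<not> good i k x j" if "i \<le> j" "j < L" for j
      using not_less_Least[of j "\<lambda>j'. i \<le> j' \<and> good i k x j'"] that unfolding L_def by auto
    have Lk: "L + k + 1 \<le> length T" using L(2) by (simp add: good_def)
    have oL: "occ (w @ [x]) L" using occ_good[OF ik] L(2) unfolding w_def by simp
    have tk: "take (k+1) (drop L T) = w @ [x]" using oL ik unfolding occ_def w_def by simp
    have Pn: "P = take (k+1) (drop L T) @ s'" using Cons.prems(7) tk unfolding w_def by simp
    have left: "\<forall>j<L. \<not> occ (take (k+1) (drop L T)) j"
    proof (intro allI impI)
      fix j assume j: "j < L"
      show "\<not> occ (take (k+1) (drop L T)) j"
      proof (cases "j < i")
        case True then show ?thesis using noocc tk by simp
      next
        case False then show ?thesis using Lmin[of j] j occ_good[OF ik] tk unfolding w_def by auto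
      qed
    qed
    have R1: "reach T B (1,r,x#s') (4 + 25*(k+1)*(L - i + 1)) (\<lambda>(pc',r',s''). pc' = 29 \<and> s'' = s' \<and> keyr T r' i k x L \<and> bnd r' B)"
    proof (rule reach_trans[OF pre4])
      fix c' :: conf assume "case c' of (pc',r',s'') \<Rightarrow> pc' = 5 \<and> s'' = s' \<and> keyr T r' i k x i \<and> bnd r' B"
      then obtain r' where c': "c' = (5, r', s')" "keyr T r' i k x i" "bnd r' B" by auto
      show "reach T B c' (25*(k+1)*(L - i + 1)) (\<lambda>(pc',r',s''). pc' = 29 \<and> s'' = s' \<and> keyr T r' i k x L \<and> bnd r' B)"
        using sc[OF c'(2,3)] True unfolding c'(1) L_def by simp
    qed
    have sf2: "L \<le> B" "Suc k \<le> B" using Lk BB by linarith+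
    have R2: "reach T B (1,r,x#s') (4 + 25*(k+1)*(L - i + 1) + 3) (\<lambda>(pc',r',s''). pc' = 1 \<and> s'' = s' \<and>
       r' 0 = length T \<and> r' 1 = L \<and> r' 2 = k + 1 \<and> r' 6 = 1 \<and> bnd r' B)"
    proof (rule reach_trans[OF R1])
      fix c' :: conf assume "case c' of (pc',r',s'') \<Rightarrow> pc' = 29 \<and> s'' = s' \<and> keyr T r' i k x L \<and> bnd r' B"
      then obtain r' where c': "c' = (29, r', s')" "keyr T r' i k x L" "bnd r' B" by auto
      have kr: "r' 0 = length T" "r' 1 = i" "r' 2 = k" "r' 3 = x" "r' 4 = L" "r' 6 = 1" using c'(2) by (simp_all add: keyr_def)
      show "reach T B c' 3 (\<lambda>(pc',r',s''). pc' = 1 \<and> s'' = s' \<and>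
       r' 0 = length T \<and> r' 1 = L \<and> r' 2 = k + 1 \<and> r' 6 = 1 \<and> bnd r' B)"
        unfolding c'(1) using c'(3) kr
        apply -
      apply (rule reach_step, simp add: sf2, simp, simp add: step_simp sf2)
      apply (rule reach_step, simp add: sf2, simp, simp add: step_simp sf2)
      apply (rule reach_step, simp add: sf2, simp, simp add: step_simp sf2)
        apply (rule reach_stop)
        apply (simp_all add: sf2)
        done
    qed
    have R3: "reach T B (1,r,x#s') (4 + 25*(k+1)*(L - i + 1) + 3 + 32*(2*length T - 2*L - (k+1) + 2)*((k+1) + length s' + 1))
       (\<lambda>c'. halted_with prg c' (sublist P T))"
    proof (rule reach_trans[OF R2])
      fix c' :: conf assume "case c' of (pc',r',s'') \<Rightarrow> pc' = 1 \<and> s'' = s' \<and>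
       r' 0 = length T \<and> r' 1 = L \<and> r' 2 = k + 1 \<and> r' 6 = 1 \<and> bnd r' B"
      then obtain r' where c': "c' = (1, r', s')" "r' 0 = length T" "r' 1 = L" "r' 2 = k + 1" "r' 6 = 1" "bnd r' B" by auto
      show "reach T B c' (32*(2*length T - 2*L - (k+1) + 2)*((k+1) + length s' + 1)) (\<lambda>c'. halted_with prg c' (sublist P T))"
        unfolding c'(1) by (rule Cons.IH[OF c'(2-6) _ Pn left xs(2)]) (use Lk in simp)
    qed
    show ?thesis
      apply (rule reach_mono[OF R3])
      using cost1[OF L(1) Lk, of "k + length (x#s') + 1"] by simp_all
  next
    case False
    have ns: "\<not> sublist P T"
    proof
      assume "sublist P T"
      then obtain j where "occ P j" using sublist_occ by blast
      then have o: "occ (w @ [x]) j" using Cons.prems(7) occ_prefix[of "w @ [x]" s' j] unfolding w_def by simp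
      show False
      proof (cases "j < i")
        case True then show False using noocc o by simp
      next
        case False2: False
        then show False using False o occ_good[OF ik] unfolding w_def by auto
      qed
    qed
    have R: "reach T B (1,r,x#s') (4 + 25*(k+1)*(length T - k - i + 1)) (\<lambda>c'. halted_with prg c' (sublist P T))"
    proof (rule reach_trans[OF pre4])
      fix c' :: conf assume "case c' of (pc',r',s'') \<Rightarrow> pc' = 5 \<and> s'' = s' \<and> keyr T r' i k x i \<and> bnd r' B"
      then obtain r' where c': "c' = (5, r', s')" "keyr T r' i k x i" "bnd r' B" by auto
      show "reach T B c' (25*(k+1)*(length T - k - i + 1)) (\<lambda>c'. halted_with prg c' (sublist P T))"
        using sc[OF c'(2,3)] False ns unfolding c'(1)
        by (auto elim!: reach_mono simp: halted_with_def split: prod.splits)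
    qed
    show ?thesis
      apply (rule reach_mono[OF R])
      using cost2[OF ik, of "k + length (x#s') + 1"] by simp_all
  qed
qed
end


lemma aux_mul: "\<sigma> + 1 \<le> (X::nat) \<Longrightarrow> n + \<sigma> + 1 \<le> (n + 2) * X"
proof -
  assume a: "\<sigma> + 1 \<le> X"
  have "n * 1 \<le> n * X" using a by (intro mult_le_mono2) simp
  moreover have "(n + 2) * X = n * X + 2 * X" by (simp add: algebra_simps)
  ultimately show ?thesis using a by linarith
qed

lemma bound_pow: "n + \<sigma> + 1 \<le> (n + 2) ^ (\<sigma> + 1)"
proof -
  have a: "Suc \<sigma> \<le> 2 ^ \<sigma>" by (induction \<sigma>) auto
  have b: "(2::nat) ^ \<sigma> \<le> (n + 2) ^ \<sigma>" by (rule power_mono) auto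
  have "n + \<sigma> + 1 \<le> (n + 2) * (n + 2) ^ \<sigma>" by (rule aux_mul) (use a b in linarith)
  then show ?thesis by simp
qed

theorem corollary1:
  fixes \<sigma> :: nat
  shows "\<exists>(prog :: instr list) (C :: nat) (d :: nat).
           \<forall>T P :: nat list. set T \<subseteq> {..<\<sigma>} \<and> set P \<subseteq> {..<\<sigma>} \<longrightarrow>
             (\<exists>t \<le> C * (length T + 1) * (length P + 1). run_ok prog T P t d (sublist P T))"
proof (rule exI[of _ prg], rule exI[of _ 65], rule exI[of _ "\<sigma> + 1"], intro allI impI)
  fix T P :: "nat list"
  assume a: "set T \<subseteq> {..<\<sigma>} \<and> set P \<subseteq> {..<\<sigma>}"
  define B where "B = length T + \<sigma> + 1"
  have BB: "length T + \<sigma> \<le> B" by (simp add: B_def)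
  let ?r = "((\<lambda>_. 0)(0 := length T))(6 := 1) :: nat \<Rightarrow> nat"
  have bnd0: "bnd ((\<lambda>_. 0)(0 := length T)) B" "bnd ?r B" by (auto simp: bnd_def B_def)
  have M: "reach T B (1, ?r, P) (32*(2*length T - 2*0 - 0 + 2)*(0 + length P + 1)) (\<lambda>c'. halted_with prg c' (sublist P T))"
    by (rule main_loop[OF conjunct1[OF a] BB]) (use a bnd0 in auto)
  have R: "reach T B (init (length T) P) (1 + 32*(2*length T - 2*0 - 0 + 2)*(0 + length P + 1)) (\<lambda>c'. halted_with prg c' (sublist P T))"
    unfolding init_def
    apply (rule reach_step)
    using bnd0 M by (simp_all add: step_simp add.assoc)
  have cst: "1 + 32*(2*length T - 2*0 - 0 + 2)*(0 + length P + 1) \<le> 65 * (length T + 1) * (length P + 1)"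
  proof -
    have x: "1 \<le> (length T + 1) * (length P + 1)" by simp
    have e: "32*(2*length T - 2*0 - 0 + 2)*(0 + length P + 1) = 64*((length T+1)*(length P+1))" by (simp add: add_mult_distrib add_mult_distrib2)
    have e2: "65 * (length T + 1) * (length P + 1) = 65*((length T+1)*(length P+1))" by (simp add: add_mult_distrib add_mult_distrib2)
    show ?thesis unfolding e e2 using x by linarith
  qed
  obtain t c' where t: "t \<le> 1 + 32*(2*length T - 2*0 - 0 + 2)*(0 + length P + 1)"
    and rb: "runb T B (init (length T) P) t c'" and h: "halted_with prg c' (sublist P T)"
    using R unfolding reach_def by blast
  show "\<exists>t \<le> 65 * (length T + 1) * (length P + 1). run_ok prg T P t (\<sigma> + 1) (sublist P T)"
  proof (intro exI conjI)
    show "t \<le> 65 * (length T + 1) * (length P + 1)" using t cst by linarith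
    show "run_ok prg T P t (\<sigma> + 1) (sublist P T)"
      unfolding run_ok_def
    proof (intro conjI allI impI)
      show "halted_with prg (exec prg T (init (length T) P) t) (sublist P T)"
        using rb h by (simp add: runb_def)
      fix u i assume "u \<le> t"
      then have "bnd (fst (snd (exec prg T (init (length T) P) u))) B" using rb by (simp add: runb_def)
      then have "fst (snd (exec prg T (init (length T) P) u)) i \<le> B" by (rule bndD)
      also have "B \<le> (length T + 2) ^ (\<sigma> + 1)" unfolding B_def by (rule bound_pow)
      finally show "fst (snd (exec prg T (init (length T) P) u)) i \<le> (length T + 2) ^ (\<sigma> + 1)" .
    qed
  qed
qed
end
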